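(* Let $n\ge 2$, $q\ge 2$ be integers, $S_1=\sqrt{q^2+4(q-1)(n-2)}$, let $d$ be an integer and define $j$ by $d=n-1-\frac{n-2+j}{q}$ with $j\in\left[0,\frac{S_1-q}{2}\right)$. Put $d_0=n-\frac{j(n-1)}{q(j+q-1)}$ and let $e\in(0,1]$ be such that $d_0+e$ is an integer. Define $$\begin{aligned} A&=-(q+j-2)[eq(j+q-1)]^2+(n-1)(q-1)(j+q)[n(q-1)-j(q+j-2)]\\&\quad+eq(j+q-1)[(q^2+jq-q-2j)(q+j-2)+2n(q-1)],\\ B&=(n-2+j)(q-1)+j(j-1)+eq(j+q-1),\\ C&=(n-1)(q-1)(j+q)+eq(j+q-1),\\ D&=\Big[(n-1)(q-1)+(2e-1)(j+q-1)\tfrac{q}{2}\Big]^2+(j+q-1)^2\Big[(n-1)(q-1)-\tfrac{q^2}{4}\Big],\\ E&=(j+q-1)^3[(n-1)(q-2)+n-j], \end{aligned}$$ and $$\mu_d^*=\frac{n(q-1)CD[C+q(j+q-1)]}{AB[B+q(j+q-1)]},\quad \mu_{d_0+e-1}^*=\frac{en(q-1)E[C+q(j+q-1)]}{AB},\quad \mu_{d_0+e}^*=\frac{(1-e)n(q-1)CE}{A[B+q(j+q-1)]}.$$ Then for each $l\in\{1,2,3\}$, $$\mu_d^*\frac{K_l^{(n,q)}(d)}{r_l}+\mu_{d_0+e-1}^*\frac{K_l^{(n,q)}(d_0+e-1)}{r_l}+\mu_{d_0+e}^*\frac{K_l^{(n,q)}(d_0+e)}{r_l}=-1.$$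
   Context: $K_l^{(n,q)}(z)=\sum_{i=0}^{l}(-1)^i(q-1)^{l-i}\binom{z}{i}\binom{n-z}{l-i}$ is the Krawtchouk polynomial and $r_l=(q-1)^l\binom{n}{l}$. *)

theory Defs
  imports Complex_Main
begin

text \<open>Krawtchouk polynomial K_l^{(n,q)}(z), evaluated at a real argument z
  (binomials via generalized binomial coefficients, which agree with the usual
  ones at integer arguments).\<close>
definition krawtchouk :: "nat \<Rightarrow> nat \<Rightarrow> nat \<Rightarrow> real \<Rightarrow> real" where
  "krawtchouk n q l z =
     (\<Sum>i=0..l. (-1)^i * (real q - 1)^(l - i) * (z gchoose i) * ((real n - z) gchoose (l - i)))"

definition rK :: "nat \<Rightarrow> nat \<Rightarrow> nat \<Rightarrow> real" where
  "rK n q l = (real q - 1)^l * real (n choose l)"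

end

theory Submission
  imports Defs
begin

lemma poly1:
  fixes n' q' j e :: real
  shows "let d0 = n' - j * (n' - 1) / (q' * (j + q' - 1));
             A = - (q' + j - 2) * (e * q' * (j + q' - 1))^2
                 + (n' - 1) * (q' - 1) * (j + q') * (n' * (q' - 1) - j * (q' + j - 2))
                 + e * q' * (j + q' - 1) * ((q'^2 + j * q' - q' - 2 * j) * (q' + j - 2) + 2 * n' * (q' - 1));
             B = (n' - 2 + j) * (q' - 1) + j * (j - 1) + e * q' * (j + q' - 1);
             C = (n' - 1) * (q' - 1) * (j + q') + e * q' * (j + q' - 1);
             D = ((n' - 1) * (q' - 1) + (2 * e - 1) * (j + q' - 1) * (q' / 2))^2
                 + (j + q' - 1)^2 * ((n' - 1) * (q' - 1) - q'^2 / 4);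
             E = (j + q' - 1)^3 * ((n' - 1) * (q' - 2) + n' - j);
   W = q' * (j + q' - 1); D4 = (2*(n' - 1) * (q' - 1) + (2 * e - 1) * (j + q' - 1) * q')^2 + (j + q' - 1)^2 * (4*(n' - 1) * (q' - 1) - q'^2); dq = q'*(n'-1)-(n'-2+j); yw = n'*W - j*(n'-1) + e*W; kf = (\<lambda>z s. (q'-1)*(n'*s-z) - z)
   in n'*(q'-1)*(C*D4*(C+W)*kf dq q'*W^1 + 4*e*E*(C+W)*(B+W)*kf (yw-W) W*q'^1 + 4*(1-e)*C*E*B*kf yw W*q'^1) + 4*((q'-1)*n')*A*B*(B+W)*q'^1*W^1 = 0"
  unfolding Let_def by algebra

lemma Ks1:
  assumes "s \<noteq> (0::real)"
  shows "krawtchouk n q 1 (z/s) = (\<lambda>z s. (real q-1)*(real n*s-z) - z) z s / (1*s^1)"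
  using assms by (simp add: krawtchouk_def gbinomial_prod_rev numeral_2_eq_2 numeral_3_eq_3 field_simps)

lemma poly2:
  fixes n' q' j e :: real
  shows "let d0 = n' - j * (n' - 1) / (q' * (j + q' - 1));
             A = - (q' + j - 2) * (e * q' * (j + q' - 1))^2
                 + (n' - 1) * (q' - 1) * (j + q') * (n' * (q' - 1) - j * (q' + j - 2))
                 + e * q' * (j + q' - 1) * ((q'^2 + j * q' - q' - 2 * j) * (q' + j - 2) + 2 * n' * (q' - 1));
             B = (n' - 2 + j) * (q' - 1) + j * (j - 1) + e * q' * (j + q' - 1);
             C = (n' - 1) * (q' - 1) * (j + q') + e * q' * (j + q' - 1);
             D = ((n' - 1) * (q' - 1) + (2 * e - 1) * (j + q' - 1) * (q' / 2))^2
                 + (j + q' - 1)^2 * ((n' - 1) * (q' - 1) - q'^2 / 4);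
             E = (j + q' - 1)^3 * ((n' - 1) * (q' - 2) + n' - j);
   W = q' * (j + q' - 1); D4 = (2*(n' - 1) * (q' - 1) + (2 * e - 1) * (j + q' - 1) * q')^2 + (j + q' - 1)^2 * (4*(n' - 1) * (q' - 1) - q'^2); dq = q'*(n'-1)-(n'-2+j); yw = n'*W - j*(n'-1) + e*W; kf = (\<lambda>z s. (q'-1)^2*((n'*s-z)*(n'*s-z-s)) - 2*(q'-1)*z*(n'*s-z) + z*(z-s))
   in n'*(q'-1)*(C*D4*(C+W)*kf dq q'*W^2 + 4*e*E*(C+W)*(B+W)*kf (yw-W) W*q'^2 + 4*(1-e)*C*E*B*kf yw W*q'^2) + 4*((q'-1)^2*n'*(n'-1))*A*B*(B+W)*q'^2*W^2 = 0"
  unfolding Let_def by algebra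

lemma Ks2:
  assumes "s \<noteq> (0::real)"
  shows "krawtchouk n q 2 (z/s) = (\<lambda>z s. (real q-1)^2*((real n*s-z)*(real n*s-z-s)) - 2*(real q-1)*z*(real n*s-z) + z*(z-s)) z s / (2*s^2)"
  using assms by (simp add: krawtchouk_def gbinomial_prod_rev numeral_2_eq_2 numeral_3_eq_3 field_simps)

lemma poly3:
  fixes n' q' j e :: real
  shows "let d0 = n' - j * (n' - 1) / (q' * (j + q' - 1));
             A = - (q' + j - 2) * (e * q' * (j + q' - 1))^2
                 + (n' - 1) * (q' - 1) * (j + q') * (n' * (q' - 1) - j * (q' + j - 2))
                 + e * q' * (j + q' - 1) * ((q'^2 + j * q' - q' - 2 * j) * (q' + j - 2) + 2 * n' * (q' - 1));
             B = (n' - 2 + j) * (q' - 1) + j * (j - 1) + e * q' * (j + q' - 1);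
             C = (n' - 1) * (q' - 1) * (j + q') + e * q' * (j + q' - 1);
             D = ((n' - 1) * (q' - 1) + (2 * e - 1) * (j + q' - 1) * (q' / 2))^2
                 + (j + q' - 1)^2 * ((n' - 1) * (q' - 1) - q'^2 / 4);
             E = (j + q' - 1)^3 * ((n' - 1) * (q' - 2) + n' - j);
   W = q' * (j + q' - 1); D4 = (2*(n' - 1) * (q' - 1) + (2 * e - 1) * (j + q' - 1) * q')^2 + (j + q' - 1)^2 * (4*(n' - 1) * (q' - 1) - q'^2); dq = q'*(n'-1)-(n'-2+j); yw = n'*W - j*(n'-1) + e*W; kf = (\<lambda>z s. (q'-1)^3*((n'*s-z)*(n'*s-z-s)*(n'*s-z-2*s)) - 3*(q'-1)^2*z*((n'*s-z)*(n'*s-z-s)) + 3*(q'-1)*(z*(z-s))*(n'*s-z) - z*(z-s)*(z-2*s))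
   in n'*(q'-1)*(C*D4*(C+W)*kf dq q'*W^3 + 4*e*E*(C+W)*(B+W)*kf (yw-W) W*q'^3 + 4*(1-e)*C*E*B*kf yw W*q'^3) + 4*((q'-1)^3*n'*(n'-1)*(n'-2))*A*B*(B+W)*q'^3*W^3 = 0"
  unfolding Let_def by algebra

lemma Ks3:
  assumes "s \<noteq> (0::real)"
  shows "krawtchouk n q 3 (z/s) = (\<lambda>z s. (real q-1)^3*((real n*s-z)*(real n*s-z-s)*(real n*s-z-2*s)) - 3*(real q-1)^2*z*((real n*s-z)*(real n*s-z-s)) + 3*(real q-1)*(z*(z-s))*(real n*s-z) - z*(z-s)*(z-2*s)) z s / (6*s^3)"
  using assms by (simp add: krawtchouk_def gbinomial_prod_rev numeral_2_eq_2 numeral_3_eq_3 field_simps)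

lemma rK1: "rK n q 1 = ((real q - 1) * real n) / 1"
  by (simp add: rK_def)

lemma rK2: "rK n q 2 = ((real q - 1)^2 * real n * (real n - 1)) / 2"
  by (simp add: rK_def binomial_gbinomial gbinomial_prod_rev numeral_2_eq_2 numeral_3_eq_3 field_simps)
lemma rK3: "rK n q 3 = ((real q - 1)^3 * real n * (real n - 1) * (real n - 2)) / 6"
  by (simp add: rK_def binomial_gbinomial gbinomial_prod_rev numeral_2_eq_2 numeral_3_eq_3 field_simps)
lemma D4: fixes n' q' j e :: real shows "4 * (((n' - 1) * (q' - 1) + (2 * e - 1) * (j + q' - 1) * (q' / 2))^2
                 + (j + q' - 1)^2 * ((n' - 1) * (q' - 1) - q'^2 / 4)) = (2*(n' - 1) * (q' - 1) + (2 * e - 1) * (j + q' - 1) * q')^2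
                 + (j + q' - 1)^2 * (4*(n' - 1) * (q' - 1) - q'^2)"
  by (simp add: power2_eq_square field_simps)
lemma absl:
  fixes N Q e A B C D D4 E W K0 K1 K2 r k0 k1 k2 a b c r' :: real
  assumes "A \<noteq> 0" "B \<noteq> 0" "B + W \<noteq> 0" "c \<noteq> 0" "a \<noteq> 0" "b \<noteq> 0" "r' \<noteq> 0"
    "K0 = k0 / (c * a)" "K1 = k1 / (c * b)" "K2 = k2 / (c * b)" "r = r' / c" "4 * D = D4"
    "N*(Q-1)*(C*D4*(C+W)*k0*b + 4*e*E*(C+W)*(B+W)*k1*a + 4*(1-e)*C*E*B*k2*a) + 4*r'*A*B*(B+W)*a*b = 0"
  shows "N * (Q - 1) * C * D * (C + W) / (A * B * (B + W)) * K0 / r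
       + e * N * (Q - 1) * E * (C + W) / (A * B) * K1 / r
       + (1 - e) * N * (Q - 1) * C * E / (A * (B + W)) * K2 / r = -1"
proof -
  obtain G where G: "B + W = G" by blast
  have G0: "G \<noteq> 0" using G assms(3) by simp
  have h: "N*(Q-1)*(C*D4*(C+W)*k0*b + 4*e*E*(C+W)*G*k1*a + 4*(1-e)*C*E*B*k2*a) + 4*r'*A*B*G*a*b = 0"
    using assms(13) G by simp
  show ?thesis
    unfolding assms(8-11) G using assms(1,2,4-7) G0
    apply (simp add: field_simps)
    using assms(12) h by algebra
qed

theorem lemma3:
  fixes n q :: nat and d :: int and j e :: real
  assumes hn: "n \<ge> 2" and hq: "q \<ge> 2"
    and hj: "real_of_int d = real n - 1 - (real n - 2 + j) / real q"
    and hj0: "0 \<le> j"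
    and hj1: "j < (sqrt ((real q)^2 + 4 * (real q - 1) * (real n - 2)) - real q) / 2"
    and he: "0 < e" "e \<le> 1"
    and hint: "real n - j * (real n - 1) / (real q * (j + real q - 1)) + e \<in> \<int>"
  shows "let n' = real n; q' = real q;
             d0 = n' - j * (n' - 1) / (q' * (j + q' - 1));
             A = - (q' + j - 2) * (e * q' * (j + q' - 1))^2
                 + (n' - 1) * (q' - 1) * (j + q') * (n' * (q' - 1) - j * (q' + j - 2))
                 + e * q' * (j + q' - 1) * ((q'^2 + j * q' - q' - 2 * j) * (q' + j - 2) + 2 * n' * (q' - 1));
             B = (n' - 2 + j) * (q' - 1) + j * (j - 1) + e * q' * (j + q' - 1);
             C = (n' - 1) * (q' - 1) * (j + q') + e * q' * (j + q' - 1);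
             D = ((n' - 1) * (q' - 1) + (2 * e - 1) * (j + q' - 1) * (q' / 2))^2
                 + (j + q' - 1)^2 * ((n' - 1) * (q' - 1) - q'^2 / 4);
             E = (j + q' - 1)^3 * ((n' - 1) * (q' - 2) + n' - j);
             mu_d = n' * (q' - 1) * C * D * (C + q' * (j + q' - 1)) / (A * B * (B + q' * (j + q' - 1)));
             mu_1 = e * n' * (q' - 1) * E * (C + q' * (j + q' - 1)) / (A * B);
             mu_2 = (1 - e) * n' * (q' - 1) * C * E / (A * (B + q' * (j + q' - 1)))
         in \<forall>l\<in>{1,2,3}.
              mu_d * krawtchouk n q l (real_of_int d) / rK n q l
              + mu_1 * krawtchouk n q l (d0 + e - 1) / rK n q l
              + mu_2 * krawtchouk n q l (d0 + e) / rK n q l = -1"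
proof -
  have q0: "real q > 0" using hq by simp
  have hq2: "real q \<ge> 2" using hq by simp
  have hn2: "real n \<ge> 2" using hn by simp
  have T0: "j + real q - 1 > 0" using hj0 hq2 by simp
  have W0: "(real q * (j + real q - 1)) > 0" using q0 T0 by simp
  define X where "X = (real q)^2 + 4 * (real q - 1) * (real n - 2)"
  have X0: "X \<ge> 0" unfolding X_def using hq2 hn2 by simp
  have lt: "2*j + real q < sqrt X" using hj1 unfolding X_def by (simp add: field_simps)
  have "(2*j + real q)^2 < (sqrt X)^2"
    by (rule power_strict_mono[OF lt]) (use hj0 q0 in auto)
  then have sq: "(2*j + real q)^2 < X" using real_sqrt_pow2[OF X0] by simp
  have ex: "(2*j + real q)^2 = 4*(j*j) + 4*(j*real q) + (real q)^2" by algebra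
  have jq: "j*j + j*real q < (real q - 1)*(real n - 2)" using sq ex unfolding X_def by linarith
  have jj: "0 \<le> j*j + j*real q" using hj0 q0 by simp
  have "(real q - 1)*(real n - 2) > 0" using jq jj by linarith
  then have "real n - 2 > 0" using hq2 by (simp add: zero_less_mult_iff)
  then have "n > 2" by simp
  then have n3: "real n \<ge> 3" by simp
  define Pp where "Pp = real n * (real q - 1) - j * (real q + j - 2)"
  have e1: "j * (real q + j - 2) = j*j + j*real q - 2*j" by algebra
  have e2: "(real q - 1)*(real n - 2) = real n * (real q - 1) - 2*(real q - 1)" by algebra
  have Pp0: "Pp > 0" unfolding Pp_def e1 using jq unfolding e2 using hj0 hq2 by (smt (verit))
  define AA where "AA = - (real q + j - 2) * (e * real q * (j + real q - 1))^2
                 + (real n - 1) * (real q - 1) * (j + real q) * (real n * (real q - 1) - j * (real q + j - 2))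
                 + e * real q * (j + real q - 1) * ((real q^2 + j * real q - real q - 2 * j) * (real q + j - 2) + 2 * real n * (real q - 1))"
  have Aeq: "AA = (real q + j - 2) * e * (real q * (j + real q - 1))^2 * (1 - e) + 2 * e * (real q * (j + real q - 1)) * Pp + (real n - 1) * (real q - 1) * (j + real q) * Pp"
    unfolding AA_def Pp_def by algebra
  have t1: "(real q + j - 2) * e * (real q * (j + real q - 1))^2 * (1 - e) \<ge> 0"
    using hq2 hj0 he by (intro mult_nonneg_nonneg) auto
  have t2: "2 * e * (real q * (j + real q - 1)) * Pp \<ge> 0"
    using W0 T0 Pp0 he by (intro mult_nonneg_nonneg) auto
  have t3: "(real n - 1) * (real q - 1) * (j + real q) * Pp > 0"
    using hn2 hq2 hj0 Pp0 by (intro mult_pos_pos) auto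
  have Ane: "AA \<noteq> 0" using Aeq t1 t2 t3 by linarith
  define BB where "BB = (real n - 2 + j) * (real q - 1) + j * (j - 1) + e * real q * (j + real q - 1)"
  have Beq: "BB = (real n - 2) * (real q - 1) + j * (real q - 2) + j*j + e * (real q * (j + real q - 1))"
    unfolding BB_def by algebra
  have u1: "(real n - 2) * (real q - 1) \<ge> 0" using hn2 hq2 by simp
  have u2: "j * (real q - 2) \<ge> 0" using hj0 hq2 by simp
  have u3: "j * j \<ge> 0" by simp
  have u4: "e * (real q * (j + real q - 1)) > 0" using he W0 by simp
  have Bpos: "BB > 0" using Beq u1 u2 u3 u4 by linarith
  have Bne: "BB \<noteq> 0" using Bpos by simp
  have BWne: "BB + (real q * (j + real q - 1)) \<noteq> 0" using Bpos W0 by simp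
  note Ane = Ane[unfolded AA_def] and Bne = Bne[unfolded BB_def] and BWne = BWne[unfolded BB_def]
  have hd: "real_of_int d = (real q*(real n-1)-(real n-2+j)) / real q" using hj q0 by (simp add: field_simps)
  have hy1: "real n - j * (real n - 1) / (real q * (j + real q - 1)) + e - 1 = ((real n*(real q * (j + real q - 1)) - j*(real n-1) + e*(real q * (j + real q - 1))) - (real q * (j + real q - 1))) / (real q * (j + real q - 1))" using W0 q0 T0 by (simp add: field_simps)
  have hy2: "real n - j * (real n - 1) / (real q * (j + real q - 1)) + e = (real n*(real q * (j + real q - 1)) - j*(real n-1) + e*(real q * (j + real q - 1))) / (real q * (j + real q - 1))" using W0 q0 T0 by (simp add: field_simps)
  have K0_1: "krawtchouk n q 1 (real_of_int d) = (\<lambda>z s. (real q-1)*(real n*s-z) - z) (real q*(real n-1)-(real n-2+j)) (real q) / (1*(real q)^1)"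
    unfolding hd by (rule Ks1) (use q0 in simp)
  have K1_1: "krawtchouk n q 1 (real n - j * (real n - 1) / (real q * (j + real q - 1)) + e - 1) = (\<lambda>z s. (real q-1)*(real n*s-z) - z) ((real n*(real q * (j + real q - 1)) - j*(real n-1) + e*(real q * (j + real q - 1))) - (real q * (j + real q - 1))) (real q * (j + real q - 1)) / (1*(real q * (j + real q - 1))^1)"
    unfolding hy1 by (rule Ks1) (use W0 in linarith)
  have K2_1: "krawtchouk n q 1 (real n - j * (real n - 1) / (real q * (j + real q - 1)) + e) = (\<lambda>z s. (real q-1)*(real n*s-z) - z) (real n*(real q * (j + real q - 1)) - j*(real n-1) + e*(real q * (j + real q - 1))) (real q * (j + real q - 1)) / (1*(real q * (j + real q - 1))^1)"
    unfolding hy2 by (rule Ks1) (use W0 in linarith)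
  have a0_1: "(real q)^1 \<noteq> 0" using q0 by simp
  have b0_1: "(real q * (j + real q - 1))^1 \<noteq> 0" apply (rule power_not_zero) using W0 by linarith
  have r0_1: "(real q - 1) * real n \<noteq> 0" using n3 hq2 by simp
  have c0_1: "(1::real) \<noteq> 0" by simp
  have K0_2: "krawtchouk n q 2 (real_of_int d) = (\<lambda>z s. (real q-1)^2*((real n*s-z)*(real n*s-z-s)) - 2*(real q-1)*z*(real n*s-z) + z*(z-s)) (real q*(real n-1)-(real n-2+j)) (real q) / (2*(real q)^2)"
    unfolding hd by (rule Ks2) (use q0 in simp)
  have K1_2: "krawtchouk n q 2 (real n - j * (real n - 1) / (real q * (j + real q - 1)) + e - 1) = (\<lambda>z s. (real q-1)^2*((real n*s-z)*(real n*s-z-s)) - 2*(real q-1)*z*(real n*s-z) + z*(z-s)) ((real n*(real q * (j + real q - 1)) - j*(real n-1) + e*(real q * (j + real q - 1))) - (real q * (j + real q - 1))) (real q * (j + real q - 1)) / (2*(real q * (j + real q - 1))^2)"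
    unfolding hy1 by (rule Ks2) (use W0 in linarith)
  have K2_2: "krawtchouk n q 2 (real n - j * (real n - 1) / (real q * (j + real q - 1)) + e) = (\<lambda>z s. (real q-1)^2*((real n*s-z)*(real n*s-z-s)) - 2*(real q-1)*z*(real n*s-z) + z*(z-s)) (real n*(real q * (j + real q - 1)) - j*(real n-1) + e*(real q * (j + real q - 1))) (real q * (j + real q - 1)) / (2*(real q * (j + real q - 1))^2)"
    unfolding hy2 by (rule Ks2) (use W0 in linarith)
  have a0_2: "(real q)^2 \<noteq> 0" using q0 by simp
  have b0_2: "(real q * (j + real q - 1))^2 \<noteq> 0" apply (rule power_not_zero) using W0 by linarith
  have r0_2: "(real q - 1)^2 * real n * (real n - 1) \<noteq> 0" using n3 hq2 by simp
  have c0_2: "(2::real) \<noteq> 0" by simp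
  have K0_3: "krawtchouk n q 3 (real_of_int d) = (\<lambda>z s. (real q-1)^3*((real n*s-z)*(real n*s-z-s)*(real n*s-z-2*s)) - 3*(real q-1)^2*z*((real n*s-z)*(real n*s-z-s)) + 3*(real q-1)*(z*(z-s))*(real n*s-z) - z*(z-s)*(z-2*s)) (real q*(real n-1)-(real n-2+j)) (real q) / (6*(real q)^3)"
    unfolding hd by (rule Ks3) (use q0 in simp)
  have K1_3: "krawtchouk n q 3 (real n - j * (real n - 1) / (real q * (j + real q - 1)) + e - 1) = (\<lambda>z s. (real q-1)^3*((real n*s-z)*(real n*s-z-s)*(real n*s-z-2*s)) - 3*(real q-1)^2*z*((real n*s-z)*(real n*s-z-s)) + 3*(real q-1)*(z*(z-s))*(real n*s-z) - z*(z-s)*(z-2*s)) ((real n*(real q * (j + real q - 1)) - j*(real n-1) + e*(real q * (j + real q - 1))) - (real q * (j + real q - 1))) (real q * (j + real q - 1)) / (6*(real q * (j + real q - 1))^3)"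
    unfolding hy1 by (rule Ks3) (use W0 in linarith)
  have K2_3: "krawtchouk n q 3 (real n - j * (real n - 1) / (real q * (j + real q - 1)) + e) = (\<lambda>z s. (real q-1)^3*((real n*s-z)*(real n*s-z-s)*(real n*s-z-2*s)) - 3*(real q-1)^2*z*((real n*s-z)*(real n*s-z-s)) + 3*(real q-1)*(z*(z-s))*(real n*s-z) - z*(z-s)*(z-2*s)) (real n*(real q * (j + real q - 1)) - j*(real n-1) + e*(real q * (j + real q - 1))) (real q * (j + real q - 1)) / (6*(real q * (j + real q - 1))^3)"
    unfolding hy2 by (rule Ks3) (use W0 in linarith)
  have a0_3: "(real q)^3 \<noteq> 0" using q0 by simp
  have b0_3: "(real q * (j + real q - 1))^3 \<noteq> 0" apply (rule power_not_zero) using W0 by linarith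
  have r0_3: "(real q - 1)^3 * real n * (real n - 1) * (real n - 2) \<noteq> 0" using n3 hq2 by simp
  have c0_3: "(6::real) \<noteq> 0" by simp
  show ?thesis
    unfolding Let_def
    apply (intro ballI)
    apply (erule insertE, hypsubst, rule absl[OF Ane Bne BWne c0_1 a0_1 b0_1 r0_1 K0_1 K1_1 K2_1 rK1 D4[where n'="real n" and q'="real q"] poly1[where n'="real n" and q'="real q" and j=j and e=e, unfolded Let_def]])
    apply (erule insertE, hypsubst, rule absl[OF Ane Bne BWne c0_2 a0_2 b0_2 r0_2 K0_2 K1_2 K2_2 rK2 D4[where n'="real n" and q'="real q"] poly2[where n'="real n" and q'="real q" and j=j and e=e, unfolded Let_def]])
    apply (erule insertE, hypsubst, rule absl[OF Ane Bne BWne c0_3 a0_3 b0_3 r0_3 K0_3 K1_3 K2_3 rK3 D4[where n'="real n" and q'="real q"] poly3[where n'="real n" and q'="real q" and j=j and e=e, unfolded Let_def]])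
    apply simp
    done
qed

end
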